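(* Let $\mathcal{A}$ be a finite totally ordered alphabet of size $n$. The monoid $\mathbf{Sylv}(\mathcal{A},2)$ contains exactly $\sum_{k=0}^n\binom{n}{k}S_k$ idempotents, where $(S_k)_{k\ge0}$ are the large Schröder numbers shifted by one: $S_0=S_1=1$, $S_2=2$, $S_3=6$, $S_4=22$, $\dots$ (i.e. $S_k$ is the $(k-1)$-th large Schröder number for $k\geq1$). Moreover, the idempotents are exactly the elements represented by the readings $\operatorname{R}(T)$ of the 2-reduced binary search trees $T$ such that, for every label $x$ occurring in $T$, the deepest node labelled $x$ in $T$ has no left subtree.
   Context: The sylvester monoid $\mathbf{Sylv}(\mathcal{A})$ is the quotient of the free monoid $\mathcal{A}^*$ by the relations $acWb=caWb$ for all $a,b,c\in\mathcal{A}$ with $a\le b<c$ and all $W\in\mathcal{A}^*$; $\mathbf{Sylv}(\mathcal{A},2)$ is its quotient by the additional relations $a^2=a$, $a\in\mathcal{A}$. A binary search tree $T=(L,r,R)$ is a binary tree with nodes labelled by $\mathcal{A}$ such that the label of each node is greater than or equal to all labels in its left subtree and strictly smaller than all labels in its right subtree. Its reading $\operatorname{R}(T)$ is the right-to-left postfix reading: $\operatorname{R}(\emptyset)$ is the empty word and $\operatorname{R}((L,r,R))=\operatorname{R}(R)\,\operatorname{R}(L)\,r$. A binary search tree is 2-reduced if no node has a left child carrying the same label as itself. *)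

theory Defs
  imports Main "HOL-Library.Tree"
begin

inductive sylv2_rel :: "'a::linorder list \<Rightarrow> 'a list \<Rightarrow> bool" where
  sylv: "a \<le> b \<Longrightarrow> b < c \<Longrightarrow> sylv2_rel ([a, c] @ W @ [b]) ([c, a] @ W @ [b])"
| idem: "sylv2_rel [a, a] [a]"

inductive sylv2_cong :: "'a::linorder list \<Rightarrow> 'a list \<Rightarrow> bool" where
  gen: "sylv2_rel x y \<Longrightarrow> sylv2_cong (u @ x @ v) (u @ y @ v)"
| refl: "sylv2_cong w w"
| sym: "sylv2_cong w v \<Longrightarrow> sylv2_cong v w"
| trans: "sylv2_cong u v \<Longrightarrow> sylv2_cong v w \<Longrightarrow> sylv2_cong u w"

definition sylv2_class :: "'a::linorder list \<Rightarrow> 'a list set" where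
  "sylv2_class w = {v. sylv2_cong w v}"

definition sylv2_idempotents :: "'a::linorder list set set" where
  "sylv2_idempotents = {sylv2_class w | w. sylv2_cong (w @ w) w}"

fun is_bst :: "'a::linorder tree \<Rightarrow> bool" where
  "is_bst Leaf = True"
| "is_bst (Node l a r) = (is_bst l \<and> is_bst r \<and> (\<forall>x\<in>set_tree l. x \<le> a) \<and> (\<forall>x\<in>set_tree r. a < x))"

fun reading :: "'a tree \<Rightarrow> 'a list" where
  "reading Leaf = []"
| "reading (Node l a r) = reading r @ reading l @ [a]"

fun two_reduced :: "'a tree \<Rightarrow> bool" where
  "two_reduced Leaf = True"
| "two_reduced (Node l a r) = (two_reduced l \<and> two_reduced r \<and> (case l of Leaf \<Rightarrow> True | Node _ b _ \<Rightarrow> b \<noteq> a))"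

fun nodes_d :: "nat \<Rightarrow> 'a tree \<Rightarrow> (nat \<times> 'a \<times> 'a tree) set" where
  "nodes_d d Leaf = {}"
| "nodes_d d (Node l a r) = insert (d, a, l) (nodes_d (Suc d) l \<union> nodes_d (Suc d) r)"

definition deepest_no_left :: "'a tree \<Rightarrow> bool" where
  "deepest_no_left T = (\<forall>x\<in>set_tree T. \<forall>d l.
      (d, x, l) \<in> nodes_d 0 T \<and> d = Max {d'. \<exists>l'. (d', x, l') \<in> nodes_d 0 T} \<longrightarrow> l = Leaf)"

definition catalan :: "nat \<Rightarrow> nat" where
  "catalan k = ((2 * k) choose k) div (k + 1)"

definition large_schroeder :: "nat \<Rightarrow> nat" where
  "large_schroeder m = (\<Sum>k=0..m. ((m + k) choose (2 * k)) * catalan k)"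

definition shifted_schroeder :: "nat \<Rightarrow> nat" where
  "shifted_schroeder k = (if k = 0 then 1 else large_schroeder (k - 1))"

end

theory Submission
  imports Defs "HOL-Computational_Algebra.Formal_Power_Series"
begin


fun ins2 :: "'a::linorder \<Rightarrow> 'a tree \<Rightarrow> 'a tree" where
  "ins2 a Leaf = Node Leaf a Leaf"
| "ins2 a (Node l x r) = (if a \<le> x then (if a = x \<and> l = Leaf then Node l x r else Node (ins2 a l) x r)
      else Node l x (ins2 a r))"

definition NF :: "'a::linorder list \<Rightarrow> 'a tree" where
  "NF w = foldr ins2 w Leaf"

lemma ins2_not_Leaf[simp]: "ins2 a t \<noteq> Leaf"
  by (cases t) auto

lemma set_ins2[simp]: "set_tree (ins2 a t) = insert a (set_tree t)"
  by (induction t) auto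

lemma bst_ins2: "is_bst t \<Longrightarrow> is_bst (ins2 a t)"
  by (induction t) auto

lemma red_ins2: "two_reduced t \<Longrightarrow> two_reduced (ins2 a t)"
proof (induction t)
  case Leaf then show ?case by simp
next
  case (Node l x r)
  then show ?case by (cases l) (auto split: tree.splits)
qed

lemma ins2_idem: "ins2 a (ins2 a t) = ins2 a t"
  by (induction t) auto

lemma ins2_comm:
  "is_bst t \<Longrightarrow> y \<in> set_tree t \<Longrightarrow> a \<le> y \<Longrightarrow> y < c \<Longrightarrow> ins2 a (ins2 c t) = ins2 c (ins2 a t)"
proof (induction t)
  case Leaf then show ?case by simp
next
  case (Node l x r)
  show ?case
  proof (cases "a \<le> x \<and> x < c")
    case True then show ?thesis by auto
  next
    case False
    then consider "x < a" | "c \<le> x" by fastforce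
    then show ?thesis
    proof cases
      case 1
      then have "y \<in> set_tree r" using Node.prems by auto
      then show ?thesis using Node 1 by auto
    next
      case 2
      then have "y \<in> set_tree l" using Node.prems by auto
      then have "l \<noteq> Leaf" by auto
      then show ?thesis using Node 2 \<open>y \<in> set_tree l\<close> by auto
    qed
  qed
qed

lemma bst_NF: "is_bst (NF w)"
  by (induction w) (auto simp: NF_def bst_ins2)

lemma red_NF: "two_reduced (NF w)"
  by (induction w) (auto simp: NF_def red_ins2)

lemma NF_append: "NF (u @ v) = foldr ins2 u (NF v)"
  by (simp add: NF_def)

lemma set_foldr_ins2: "set_tree (foldr ins2 s t) = set s \<union> set_tree t"
  by (induction s) auto

lemma bst_foldr_ins2: "is_bst t \<Longrightarrow> is_bst (foldr ins2 s t)"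
  by (induction s) (auto simp: bst_ins2)

lemma rel_NF: "sylv2_rel x y \<Longrightarrow> is_bst t \<Longrightarrow> foldr ins2 x t = foldr ins2 y t"
proof (induction rule: sylv2_rel.induct)
  case (sylv a b c W)
  let ?t1 = "foldr ins2 W (ins2 b t)"
  have "is_bst ?t1" using sylv by (simp add: bst_foldr_ins2 bst_ins2)
  moreover have "b \<in> set_tree ?t1" by (simp add: set_foldr_ins2)
  ultimately show ?case using ins2_comm[of ?t1 b a c] sylv by simp
next
  case (idem a) then show ?case by (simp add: ins2_idem)
qed

lemma cong_NF: "sylv2_cong w v \<Longrightarrow> NF w = NF v"
proof (induction rule: sylv2_cong.induct)
  case (gen x y u v)
  then show ?case by (simp add: NF_append rel_NF bst_NF)
qed auto

lemma cong_ctx: "sylv2_cong x y \<Longrightarrow> sylv2_cong (u @ x @ v) (u @ y @ v)"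
proof (induction arbitrary: u v rule: sylv2_cong.induct)
  case (gen x y u' v')
  then show ?case using sylv2_cong.gen[of x y "u @ u'" "v' @ v"] by simp
next
  case (refl w) then show ?case by (rule sylv2_cong.refl)
next
  case (sym w v) then show ?case by (blast intro: sylv2_cong.sym)
next
  case (trans a b c) then show ?case by (blast intro: sylv2_cong.trans)
qed

lemma cong_pre: "sylv2_cong x y \<Longrightarrow> sylv2_cong (u @ x) (u @ y)"
  using cong_ctx[of x y u "[]"] by simp

lemma cong_suf: "sylv2_cong x y \<Longrightarrow> sylv2_cong (x @ v) (y @ v)"
  using cong_ctx[of x y "[]" v] by simp

lemma cong_app: "sylv2_cong x y \<Longrightarrow> sylv2_cong x' y' \<Longrightarrow> sylv2_cong (x @ x') (y @ y')"
  by (meson cong_pre cong_suf sylv2_cong.trans)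

lemma swap_lemma:
  "(\<forall>c\<in>set s. b < c) \<Longrightarrow> a \<le> b \<Longrightarrow> sylv2_cong (a # s @ W @ [b]) (s @ a # W @ [b])"
proof (induction s)
  case Nil then show ?case by (simp add: sylv2_cong.refl)
next
  case (Cons c s)
  have 1: "sylv2_cong ([a, c] @ (s @ W) @ [b]) ([c, a] @ (s @ W) @ [b])"
    using sylv2_cong.gen[OF sylv2_rel.sylv[of a b c "s @ W"], of "[]" "[]"] Cons.prems by simp
  have 2: "sylv2_cong ([c] @ (a # s @ W @ [b])) ([c] @ (s @ a # W @ [b]))"
    using cong_pre[of "a # s @ W @ [b]" "s @ a # W @ [b]" "[c]"] Cons by simp
  show ?case using sylv2_cong.trans[OF 1] 2 by simp
qed

lemma set_reading[simp]: "set (reading t) = set_tree t"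
  by (induction t) auto

lemma cong_ins2: "is_bst t \<Longrightarrow> sylv2_cong (a # reading t) (reading (ins2 a t))"
proof (induction t arbitrary: a)
  case Leaf then show ?case by (simp add: sylv2_cong.refl)
next
  case (Node l x r)
  show ?case
  proof (cases "a \<le> x")
    case True
    have sw: "sylv2_cong (a # reading r @ reading l @ [x]) (reading r @ a # reading l @ [x])"
      using swap_lemma[of "reading r" x a "reading l"] Node.prems True by auto
    show ?thesis
    proof (cases "a = x \<and> l = Leaf")
      case True
      then have "sylv2_cong (reading r @ [x, x] @ []) (reading r @ [x] @ [])"
        using sylv2_cong.gen[OF sylv2_rel.idem] by blast
      then show ?thesis using sw True by (auto intro: sylv2_cong.trans)
    next
      case False
      have "sylv2_cong (a # reading l) (reading (ins2 a l))" using Node by auto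
      then have "sylv2_cong (reading r @ (a # reading l) @ [x]) (reading r @ reading (ins2 a l) @ [x])"
        by (rule cong_ctx)
      then show ?thesis using sw False \<open>a \<le> x\<close> by (auto intro: sylv2_cong.trans)
    qed
  next
    case False
    have "sylv2_cong (a # reading r) (reading (ins2 a r))" using Node by auto
    then have "sylv2_cong ((a # reading r) @ reading l @ [x]) (reading (ins2 a r) @ reading l @ [x])"
      by (rule cong_suf)
    then show ?thesis using False by auto
  qed
qed

lemma cong_reading_NF: "sylv2_cong w (reading (NF w))"
proof (induction w)
  case Nil then show ?case by (simp add: NF_def sylv2_cong.refl)
next
  case (Cons a w)
  have "sylv2_cong ([a] @ w) ([a] @ reading (NF w))" using cong_pre Cons by blast
  moreover have "sylv2_cong (a # reading (NF w)) (reading (ins2 a (NF w)))"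
    by (rule cong_ins2[OF bst_NF])
  ultimately show ?case by (auto simp: NF_def intro: sylv2_cong.trans)
qed

lemma cong_iff_NF: "sylv2_cong w v \<longleftrightarrow> NF w = NF v"
proof
  assume "NF w = NF v"
  then show "sylv2_cong w v"
    by (metis cong_reading_NF sylv2_cong.sym sylv2_cong.trans)
qed (rule cong_NF)



lemma foldr_ins2_not_Leaf: "t \<noteq> Leaf \<Longrightarrow> foldr ins2 s t \<noteq> Leaf"
  by (cases s) auto

lemma right_ins: "\<forall>c\<in>set s. x < c \<Longrightarrow> foldr ins2 s (Node L x R) = Node L x (foldr ins2 s R)"
  by (induction s) auto

lemma left_ins: "\<forall>c\<in>set s. c \<le> x \<Longrightarrow> L \<noteq> Leaf \<Longrightarrow>
   foldr ins2 s (Node L x R) = Node (foldr ins2 s L) x R"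
  by (induction s) (auto simp: foldr_ins2_not_Leaf)

lemma NF_reading: "is_bst t \<Longrightarrow> two_reduced t \<Longrightarrow> NF (reading t) = t"
proof (induction t)
  case Leaf then show ?case by (simp add: NF_def)
next
  case (Node l x r)
  have A: "foldr ins2 (reading l) (Node Leaf x Leaf) = Node l x Leaf"
  proof (cases l)
    case Leaf then show ?thesis by simp
  next
    case (Node ll y lr)
    have yx: "y \<le> x" "y \<noteq> x" using Node.prems \<open>l = _\<close> by auto
    have "foldr ins2 (reading l) (Node Leaf x Leaf)
        = foldr ins2 (reading lr @ reading ll) (ins2 y (Node Leaf x Leaf))"
      using \<open>l = _\<close> by simp
    also have "\<dots> = foldr ins2 (reading lr @ reading ll) (Node (Node Leaf y Leaf) x Leaf)"
      using yx by simp
    also have "\<dots> = Node (foldr ins2 (reading lr @ reading ll) (Node Leaf y Leaf)) x Leaf"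
      using Node.prems \<open>l = _\<close> by (intro left_ins) auto
    also have "foldr ins2 (reading lr @ reading ll) (Node Leaf y Leaf) = NF (reading l)"
      using \<open>l = _\<close> by (simp add: NF_def)
    also have "\<dots> = l" using Node.IH(1) Node.prems by auto
    finally show ?thesis .
  qed
  have "NF (reading (Node l x r)) = foldr ins2 (reading r) (foldr ins2 (reading l) (Node Leaf x Leaf))"
    by (simp add: NF_def)
  also have "\<dots> = Node l x (NF (reading r))"
    using A Node.prems by (simp add: right_ins NF_def)
  also have "NF (reading r) = r" using Node by auto
  finally show ?case .
qed

lemma ins2_size: "ins2 c t = t \<or> size (ins2 c t) = Suc (size t)"
  by (induction t) auto

lemma size_foldr_ins2: "size t \<le> size (foldr ins2 s t)"
proof (induction s)
  case (Cons c s) then show ?case using ins2_size[of c "foldr ins2 s t"] by auto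
qed simp

lemma foldr_fix: "size (foldr ins2 s t) = size t \<Longrightarrow> foldr ins2 s t = t \<and> (\<forall>c\<in>set s. ins2 c t = t)"
proof (induction s)
  case Nil then show ?case by simp
next
  case (Cons c s)
  let ?S = "foldr ins2 s t"
  have "size t \<le> size ?S" by (rule size_foldr_ins2)
  with Cons.prems ins2_size[of c ?S] have "ins2 c ?S = ?S" "size ?S = size t" by auto
  with Cons.IH show ?case by auto
qed

lemma foldr_fix_iff: "foldr ins2 s t = t \<longleftrightarrow> (\<forall>c\<in>set s. ins2 c t = t)"
proof
  assume "foldr ins2 s t = t" then show "\<forall>c\<in>set s. ins2 c t = t" using foldr_fix by metis
next
  assume "\<forall>c\<in>set s. ins2 c t = t" then show "foldr ins2 s t = t" by (induction s) auto
qed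

definition absorb :: "'a::linorder tree \<Rightarrow> bool" where
  "absorb t = (\<forall>c\<in>set_tree t. ins2 c t = t)"

lemma ins2_notin: "c \<notin> set_tree t \<Longrightarrow> ins2 c t \<noteq> t"
  by (metis insertI1 set_ins2)

lemma absorb_Node: "is_bst (Node l x r) \<Longrightarrow>
   absorb (Node l x r) \<longleftrightarrow> absorb l \<and> absorb r \<and> (l = Leaf \<or> x \<in> set_tree l)"
proof -
  assume b: "is_bst (Node l x r)"
  show ?thesis
  proof
    assume a: "absorb (Node l x r)"
    have "l = Leaf \<or> x \<in> set_tree l"
    proof (rule ccontr)
      assume "\<not> ?thesis"
      then have "ins2 x (Node l x r) = Node (ins2 x l) x r" "ins2 x l \<noteq> l" using ins2_notin by auto
      then show False using a by (auto simp: absorb_def)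
    qed
    moreover have "absorb l"
      unfolding absorb_def
    proof
      fix c assume c: "c \<in> set_tree l"
      then have "c \<le> x" using b by auto
      then have "l \<noteq> Leaf" "ins2 c (Node l x r) = Node (ins2 c l) x r" using c by auto
      then show "ins2 c l = l" using a c by (auto simp: absorb_def)
    qed
    moreover have "absorb r"
      unfolding absorb_def
    proof
      fix c assume c: "c \<in> set_tree r"
      then have "x < c" using b by auto
      then have "ins2 c (Node l x r) = Node l x (ins2 c r)" by auto
      then show "ins2 c r = r" using a c by (auto simp: absorb_def)
    qed
    ultimately show "absorb l \<and> absorb r \<and> (l = Leaf \<or> x \<in> set_tree l)" by blast
  next
    assume a: "absorb l \<and> absorb r \<and> (l = Leaf \<or> x \<in> set_tree l)"
    show "absorb (Node l x r)"
      unfolding absorb_def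
    proof
      fix c assume c: "c \<in> set_tree (Node l x r)"
      consider "c < x" | "c = x" | "x < c" by fastforce
      then show "ins2 c (Node l x r) = Node l x r"
      proof cases
        case 1
        then have "c \<in> set_tree l" using c b by auto
        then show ?thesis using a 1 by (auto simp: absorb_def)
      next
        case 2 then show ?thesis using a by (auto simp: absorb_def)
      next
        case 3
        then have "c \<in> set_tree r" using c b by auto
        then show ?thesis using a 3 by (auto simp: absorb_def)
      qed
    qed
  qed
qed

lemma nodes_d_depth: "(d, c, l') \<in> nodes_d k t \<Longrightarrow> k \<le> d"
  by (induction k t rule: nodes_d.induct) auto

lemma nodes_d_set: "(d, c, l') \<in> nodes_d k t \<Longrightarrow> c \<in> set_tree t"
  by (induction k t rule: nodes_d.induct) auto

lemma finite_nodes_d: "finite (nodes_d k t)"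
  by (induction k t rule: nodes_d.induct) auto

lemma nodes_d_ex: "c \<in> set_tree t \<Longrightarrow> \<exists>d l'. (d, c, l') \<in> nodes_d k t"
  by (induction k t rule: nodes_d.induct) auto

definition DD :: "nat \<Rightarrow> 'a tree \<Rightarrow> 'a \<Rightarrow> nat set" where
  "DD k t c = {d'. \<exists>l'. (d', c, l') \<in> nodes_d k t}"

lemma finite_DD: "finite (DD k t c)"
proof -
  have "DD k t c \<subseteq> fst ` nodes_d k t" by (force simp: DD_def)
  then show ?thesis using finite_nodes_d finite_subset by blast
qed

definition dcond :: "nat \<Rightarrow> 'a tree \<Rightarrow> 'a \<Rightarrow> bool" where
  "dcond k t c = (\<forall>d l. (d, c, l) \<in> nodes_d k t \<and> d = Max (DD k t c) \<longrightarrow> l = Leaf)"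

lemma dcond_iff: "is_bst t \<Longrightarrow> c \<in> set_tree t \<Longrightarrow> ins2 c t = t \<longleftrightarrow> dcond k t c"
proof (induction t arbitrary: k)
  case Leaf then show ?case by simp
next
  case (Node l y r)
  consider "c < y" | "c = y" | "y < c" by fastforce
  then show ?case
  proof cases
    case 1
    then have cl: "c \<in> set_tree l" using Node.prems by auto
    have "\<forall>z\<in>set_tree r. y < z" using Node.prems by simp
    then have cr: "c \<notin> set_tree r" using 1 by (meson order.asym)
    have eq: "(d, c, l') \<in> nodes_d k (Node l y r) \<longleftrightarrow> (d, c, l') \<in> nodes_d (Suc k) l"
      for d l' using 1 cr nodes_d_set[of d c l' "Suc k" r] by auto
    then have "DD k (Node l y r) c = DD (Suc k) l c" by (simp add: DD_def)
    then have "dcond k (Node l y r) c = dcond (Suc k) l c" using eq by (simp add: dcond_def)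
    moreover have "ins2 c (Node l y r) = Node l y r \<longleftrightarrow> ins2 c l = l" using 1 cl by auto
    ultimately show ?thesis using Node cl by auto
  next
    case 3
    then have cl: "c \<in> set_tree r" using Node.prems by auto
    have "\<forall>z\<in>set_tree l. z \<le> y" using Node.prems by simp
    then have cr: "c \<notin> set_tree l" using 3 by (meson leD)
    have eq: "(d, c, l') \<in> nodes_d k (Node l y r) \<longleftrightarrow> (d, c, l') \<in> nodes_d (Suc k) r"
      for d l' using 3 cr nodes_d_set[of d c l' "Suc k" l] by auto
    then have "DD k (Node l y r) c = DD (Suc k) r c" by (simp add: DD_def)
    then have "dcond k (Node l y r) c = dcond (Suc k) r c" using eq by (simp add: dcond_def)
    moreover have "ins2 c (Node l y r) = Node l y r \<longleftrightarrow> ins2 c r = r" using 3 by auto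
    ultimately show ?thesis using Node cl by auto
  next
    case 2
    have "\<forall>z\<in>set_tree r. y < z" using Node.prems by simp
    then have cr: "c \<notin> set_tree r" using 2 by blast
    have eq: "(d, c, l') \<in> nodes_d k (Node l y r) \<longleftrightarrow> (d = k \<and> l' = l) \<or> (d, c, l') \<in> nodes_d (Suc k) l"
      for d l' using 2 cr nodes_d_set[of d c l' "Suc k" r] by auto
    then have DDeq: "DD k (Node l y r) c = insert k (DD (Suc k) l c)" by (auto simp: DD_def)
    show ?thesis
    proof (cases "c \<in> set_tree l")
      case True
      obtain d0 l0 where d0: "(d0, c, l0) \<in> nodes_d (Suc k) l" using nodes_d_ex[OF True] by blast
      have ne: "DD (Suc k) l c \<noteq> {}" using d0 by (auto simp: DD_def)
      have ge: "\<forall>d\<in>DD (Suc k) l c. Suc k \<le> d" using nodes_d_depth by (auto simp: DD_def)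
      have inD: "Max (DD (Suc k) l c) \<in> DD (Suc k) l c" using Max_in[OF finite_DD ne] .
      then have MD: "Suc k \<le> Max (DD (Suc k) l c)" using ge by blast
      have M: "Max (DD k (Node l y r) c) = Max (DD (Suc k) l c)"
        unfolding DDeq using Max_insert[OF finite_DD ne, of k] MD by simp
      have Mk: "Max (DD (Suc k) l c) \<noteq> k" using MD by simp
      have "dcond k (Node l y r) c = dcond (Suc k) l c"
        unfolding dcond_def M eq using Mk by metis
      moreover have "l \<noteq> Leaf" using True by auto
      then have "ins2 c (Node l y r) = Node l y r \<longleftrightarrow> ins2 c l = l" using 2 by auto
      ultimately show ?thesis using Node True by auto
    next
      case False
      have "\<And>d l'. (d, c, l') \<notin> nodes_d (Suc k) l" using False nodes_d_set by metis
      then have "DD (Suc k) l c = {}" by (auto simp: DD_def)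
      then have M: "Max (DD k (Node l y r) c) = k" using DDeq by simp
      have "dcond k (Node l y r) c = (l = Leaf)"
        unfolding dcond_def M eq using \<open>\<And>d l'. (d, c, l') \<notin> nodes_d (Suc k) l\<close> by metis
      moreover have "ins2 c (Node l y r) = Node l y r \<longleftrightarrow> l = Leaf"
        using 2 ins2_notin[OF False] by auto
      ultimately show ?thesis by simp
    qed
  qed
qed

lemma dnl_iff_absorb: "is_bst t \<Longrightarrow> deepest_no_left t \<longleftrightarrow> absorb t"
  unfolding deepest_no_left_def absorb_def
  using dcond_iff[of t _ 0] unfolding dcond_def DD_def by auto



fun gd :: "'a::linorder tree \<Rightarrow> bool" where
  "gd Leaf = True"
| "gd (Node l x r) = (gd l \<and> gd r \<and> (\<forall>y\<in>set_tree l. y \<le> x) \<and> (\<forall>y\<in>set_tree r. x < y)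
     \<and> (case l of Leaf \<Rightarrow> True | Node _ z _ \<Rightarrow> z \<noteq> x \<and> x \<in> set_tree l))"

lemma gd_iff: "gd t \<longleftrightarrow> is_bst t \<and> two_reduced t \<and> absorb t"
proof (induction t)
  case Leaf then show ?case by (simp add: absorb_def)
next
  case (Node l x r)
  show ?case
  proof (cases "is_bst (Node l x r)")
    case True
    have e: "absorb (Node l x r) \<longleftrightarrow> absorb l \<and> absorb r \<and> (l = Leaf \<or> x \<in> set_tree l)"
      by (rule absorb_Node[OF True])
    show ?thesis
    proof (cases l)
      case Leaf
      then show ?thesis unfolding e using Node.IH True by simp
    next
      case (Node a z b)
      then show ?thesis unfolding e using Node.IH True by auto
    qed
  next
    case False
    then show ?thesis using Node by auto
  qed
qed

lemma idem_iff: "sylv2_cong (w @ w) w \<longleftrightarrow> absorb (NF w)"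
proof -
  have "sylv2_cong (w @ w) w \<longleftrightarrow> foldr ins2 w (NF w) = NF w"
    by (simp add: cong_iff_NF NF_append)
  also have "\<dots> \<longleftrightarrow> (\<forall>c\<in>set w. ins2 c (NF w) = NF w)" by (rule foldr_fix_iff)
  also have "set w = set_tree (NF w)" by (simp add: NF_def set_foldr_ins2)
  finally show ?thesis by (simp add: absorb_def)
qed

lemma part2: "sylv2_cong (w @ w) w \<longleftrightarrow>
   (\<exists>T. is_bst T \<and> two_reduced T \<and> deepest_no_left T \<and> sylv2_cong w (reading T))"
proof
  assume "sylv2_cong (w @ w) w"
  then have "absorb (NF w)" by (simp add: idem_iff)
  then show "\<exists>T. is_bst T \<and> two_reduced T \<and> deepest_no_left T \<and> sylv2_cong w (reading T)"
    using bst_NF red_NF dnl_iff_absorb cong_reading_NF by blast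
next
  assume "\<exists>T. is_bst T \<and> two_reduced T \<and> deepest_no_left T \<and> sylv2_cong w (reading T)"
  then obtain T where T: "is_bst T" "two_reduced T" "deepest_no_left T" "sylv2_cong w (reading T)"
    by blast
  then have "NF w = T" using cong_iff_NF NF_reading by metis
  then show "sylv2_cong (w @ w) w" using T by (simp add: idem_iff dnl_iff_absorb)
qed

lemma class_eq: "sylv2_class w = {v. NF w = NF v}"
  by (simp add: sylv2_class_def cong_iff_NF)

lemma idem_image: "sylv2_idempotents = (\<lambda>T. sylv2_class (reading T)) ` {T. gd T}"
proof
  show "sylv2_idempotents \<subseteq> (\<lambda>T. sylv2_class (reading T)) ` {T. gd T}"
  proof
    fix C assume "C \<in> sylv2_idempotents"
    then obtain w where w: "C = sylv2_class w" "sylv2_cong (w @ w) w"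
      by (auto simp: sylv2_idempotents_def)
    have "gd (NF w)" using w idem_iff gd_iff bst_NF red_NF by blast
    moreover have "C = sylv2_class (reading (NF w))"
      using w NF_reading[OF bst_NF red_NF, of w] by (simp add: class_eq)
    ultimately show "C \<in> (\<lambda>T. sylv2_class (reading T)) ` {T. gd T}" by blast
  qed
next
  show "(\<lambda>T. sylv2_class (reading T)) ` {T. gd T} \<subseteq> sylv2_idempotents"
  proof
    fix C assume "C \<in> (\<lambda>T. sylv2_class (reading T)) ` {T. gd T}"
    then obtain T where T: "gd T" "C = sylv2_class (reading T)" by blast
    then have "NF (reading T) = T" using gd_iff NF_reading by blast
    then have "sylv2_cong (reading T @ reading T) (reading T)" using T gd_iff idem_iff by metis
    then show "C \<in> sylv2_idempotents" using T by (auto simp: sylv2_idempotents_def)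
  qed
qed

lemma card_idem: "card (sylv2_idempotents :: 'a::linorder list set set) = card {T :: 'a tree. gd T}"
proof -
  have "inj_on (\<lambda>T. sylv2_class (reading T)) {T :: 'a tree. gd T}"
  proof (rule inj_onI)
    fix T1 T2 :: "'a tree"
    assume a: "T1 \<in> {T. gd T}" "T2 \<in> {T. gd T}" "sylv2_class (reading T1) = sylv2_class (reading T2)"
    have "NF (reading T1) = T1" "NF (reading T2) = T2" using a gd_iff NF_reading by blast+
    moreover have "reading T1 \<in> sylv2_class (reading T2)"
      using a(3) sylv2_cong.refl[of "reading T1"] unfolding sylv2_class_def by blast
    ultimately show "T1 = T2" by (simp add: class_eq)
  qed
  then show ?thesis by (simp add: idem_image card_image)
qed



declare binomial_Suc_Suc[simp del]

lemma cat_aux: "Suc k * ((2*k) choose (Suc k)) = k * ((2*k) choose k)"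
proof (cases k)
  case 0 then show ?thesis by simp
next
  case (Suc m)
  have a: "Suc k * ((2*k) choose (Suc k)) = (2*k) * ((2*k - 1) choose k)"
    using times_binomial_minus1_eq[of "Suc k" "2*k"] by simp
  have b: "k * ((2*k) choose k) = (2*k) * ((2*k - 1) choose (k - 1))"
    using times_binomial_minus1_eq[of k "2*k"] Suc by simp
  have c: "(2*k - 1) choose k = (2*k - 1) choose (k - 1)"
    using binomial_symmetric[of k "2*k-1"] Suc by (simp add: Suc_diff_Suc numeral_2_eq_2)
  show ?thesis using a b c by metis
qed

lemma cat_dvd: "Suc k dvd ((2*k) choose k)"
proof -
  have le: "(2*k) choose (Suc k) \<le> (2*k) choose k"
  proof -
    have "Suc k * ((2*k) choose (Suc k)) \<le> Suc k * ((2*k) choose k)"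
      using cat_aux[of k] by simp
    then show ?thesis by (metis Suc_mult_le_cancel1)
  qed
  have "(2*k) choose k = Suc k * (((2*k) choose k) - ((2*k) choose (Suc k)))"
    using cat_aux[of k] le by (simp add: diff_mult_distrib2)
  then show ?thesis by (metis dvd_triv_left)
qed

lemma cat_real: "real (catalan k) = real ((2*k) choose k) / real (Suc k)"
  unfolding catalan_def using cat_dvd[of k] by (simp add: real_of_nat_div)

definition bb :: "nat \<Rightarrow> real" where
  "bb n = ((1/2::real) gchoose n) * (-4) ^ n"

lemma gch_rec: "(a::real) gchoose (Suc n) = (a - of_nat n) * (a gchoose n) / of_nat (Suc n)"
  using gbinomial_mult_1[of a n] by (simp add: field_simps)

lemma cancel_aux:
  fixes x k b :: real
  assumes "x * (k + 1) * (k + 1) = 2 * (k + 1) * ((2 * k + 1) * b)" "k \<ge> 0"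
  shows "x * (k + 1) = 2 * (2 * k + 1) * b"
proof -
  have "(k + 1) * (x * (k + 1)) = (k + 1) * (2 * (2 * k + 1) * b)" using assms(1) by (simp add: algebra_simps)
  moreover have "k + 1 \<noteq> 0" using assms(2) by simp
  ultimately show ?thesis by simp
qed

lemma central_rec: "real ((2 * Suc k) choose (Suc k)) * real (Suc k) = 2 * (2 * real k + 1) * real ((2*k) choose k)"
proof -
  have 1: "Suc (2*k) * ((2*k) choose k) = (Suc (2*k) choose Suc k) * Suc k"
    by (rule Suc_times_binomial_eq)
  have 2: "Suc (Suc (2*k)) * (Suc (2*k) choose k) = (Suc (Suc (2*k)) choose Suc k) * Suc k"
    by (rule Suc_times_binomial_eq)
  have 3: "Suc (2*k) choose k = Suc (2*k) choose Suc k"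
    using binomial_symmetric[of k "Suc (2*k)"] by simp
  have "2 * Suc k = Suc (Suc (2*k))" by simp
  then have "((2 * Suc k) choose (Suc k)) * Suc k * Suc k = Suc (Suc (2*k)) * (Suc (2*k) choose Suc k) * Suc k"
    using 2 3 by simp
  also have "\<dots> = Suc (Suc (2*k)) * (Suc (2*k) * ((2*k) choose k))"
    using 1 by (simp add: mult.assoc)
  finally have "real (((2 * Suc k) choose (Suc k)) * Suc k * Suc k) = real (Suc (Suc (2*k)) * (Suc (2*k) * ((2*k) choose k)))"
    by simp
  then have "real ((2 * Suc k) choose (Suc k)) * real (Suc k) * real (Suc k)
      = 2 * real (Suc k) * ((2 * real k + 1) * real ((2*k) choose k))"
    by (simp only: of_nat_mult) (simp add: algebra_simps)
  then have "real ((2 * Suc k) choose (Suc k)) * (real k + 1) * (real k + 1)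
      = 2 * (real k + 1) * ((2 * real k + 1) * real ((2*k) choose k))" by (simp add: algebra_simps)
  then have "real ((2 * Suc k) choose (Suc k)) * (real k + 1) = 2 * (2 * real k + 1) * real ((2*k) choose k)"
    by (rule cancel_aux) simp
  then show ?thesis by (simp add: add.commute)
qed

lemma step_aux:
  fixes X B k :: real
  assumes "X * (k + 1) = 2 * (2 * k + 1) * B" "k \<ge> 0"
  shows "(4 * k + 2) * (-2 * (B / (k + 1))) / (k + 2) = -2 * (X / (k + 2))"
proof -
  have e: "(4 * k + 2) * B = X * (k + 1)" using assms(1) by (simp add: algebra_simps)
  have "(4 * k + 2) * (-2 * (B / (k + 1))) / (k + 2) = -2 * (((4 * k + 2) * B) / (k + 1)) / (k + 2)"
    by (simp add: mult.left_commute)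
  also have "\<dots> = -2 * ((X * (k + 1)) / (k + 1)) / (k + 2)" using e by simp
  also have "(X * (k + 1)) / (k + 1) = X" using assms(2) by simp
  finally show ?thesis by simp
qed

lemma bb_Suc: "bb (Suc k) = -2 * real (catalan k)"
proof (induction k)
  case 0 then show ?case by (simp add: bb_def catalan_def)
next
  case (Suc k)
  have "bb (Suc (Suc k)) = (1/2 - of_nat (Suc k)) * (-4) * bb (Suc k) / of_nat (Suc (Suc k))"
    unfolding bb_def gch_rec[of "1/2" "Suc k"] by (simp add: field_simps)
  also have "\<dots> = (4 * real k + 2) * bb (Suc k) / real (Suc (Suc k))"
    by (simp add: field_simps)
  also have "\<dots> = (4 * real k + 2) * (-2 * (real ((2*k) choose k) / (real k + 1))) / (real k + 2)"
    unfolding Suc cat_real by (simp add: algebra_simps)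
  also have "\<dots> = -2 * (real ((2 * Suc k) choose (Suc k)) / (real k + 2))"
  proof -
    have c: "real ((2 * Suc k) choose (Suc k)) * (real k + 1) = 2 * (2 * real k + 1) * real ((2*k) choose k)"
      using central_rec[of k] by (simp add: add.commute)
    show ?thesis by (rule step_aux[OF c]) simp
  qed
  also have "\<dots> = -2 * real (catalan (Suc k))"
    unfolding cat_real by simp
  finally show ?case .
qed

lemma bb_0: "bb 0 = 1" by (simp add: bb_def)

lemma bb_conv: "(\<Sum>i\<le>Suc (Suc N). bb i * bb (Suc (Suc N) - i)) = 0"
proof -
  have "(\<Sum>i\<le>Suc (Suc N). bb i * bb (Suc (Suc N) - i))
      = (\<Sum>i\<le>Suc (Suc N). (((1/2::real) gchoose i) * ((1/2) gchoose (Suc (Suc N) - i)))) * (-4) ^ (Suc (Suc N))"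
    unfolding sum_distrib_right
    by (rule sum.cong) (auto simp: bb_def power_add[symmetric])
  also have "(\<Sum>i\<le>Suc (Suc N). (((1/2::real) gchoose i) * ((1/2) gchoose (Suc (Suc N) - i)))) = (1/2 + 1/2) gchoose (Suc (Suc N))"
    using gbinomial_Vandermonde[of "1/2::real" "1/2" "Suc (Suc N)"] by (simp add: atMost_atLeast0)
  also have "(1/2 + 1/2::real) gchoose (Suc (Suc N)) = 0"
    using binomial_gbinomial[of 1 "Suc (Suc N)", where 'a=real] by (simp add: binomial_eq_0)
  finally show ?thesis by simp
qed

lemma catalan_rec: "catalan (Suc N) = (\<Sum>j\<le>N. catalan j * catalan (N - j))"
proof -
  let ?f = "\<lambda>i. bb i * bb (Suc (Suc N) - i)"
  have eq: "(\<Sum>i\<le>Suc (Suc N). ?f i) = ?f 0 + (\<Sum>i\<le>Suc N. ?f (Suc i))"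
    by (rule sum.atMost_Suc_shift)
  also have "(\<Sum>i\<le>Suc N. ?f (Suc i)) = (\<Sum>i\<le>N. ?f (Suc i)) + ?f (Suc (Suc N))"
    by simp
  also have "(\<Sum>i\<le>N. ?f (Suc i)) = (\<Sum>i\<le>N. 4 * (real (catalan i) * real (catalan (N - i))))"
  proof (rule sum.cong)
    fix i assume "i \<in> {..N}"
    then have "Suc (Suc N) - Suc i = Suc (N - i)" by auto
    then show "?f (Suc i) = 4 * (real (catalan i) * real (catalan (N - i)))"
      by (simp add: bb_Suc)
  qed simp
  finally have eq: "(\<Sum>i\<le>Suc (Suc N). ?f i) = ?f 0 + ((\<Sum>i\<le>N. 4 * (real (catalan i) * real (catalan (N - i)))) + ?f (Suc (Suc N)))" .
  have "?f 0 + ((\<Sum>i\<le>N. 4 * (real (catalan i) * real (catalan (N - i)))) + ?f (Suc (Suc N))) = 0"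
    using bb_conv[of N] eq by argo
  then have "-4 * real (catalan (Suc N)) + 4 * (\<Sum>i\<le>N. real (catalan i) * real (catalan (N - i))) = 0"
    by (simp add: bb_Suc bb_0 sum_distrib_left)
  then have "real (catalan (Suc N)) = real (\<Sum>i\<le>N. catalan i * catalan (N - i))"
    by simp
  then show ?thesis using of_nat_eq_iff by blast
qed



lemma vand_upper: "(\<Sum>a\<le>M. (a choose p) * ((M - a) choose q)) = Suc M choose (Suc (p + q))"
proof (induction M arbitrary: q)
  case 0 then show ?case by (cases p; cases q) (auto simp: binomial_Suc_Suc)
next
  case (Suc M)
  show ?case
  proof (cases q)
    case 0
    have "(\<Sum>a\<le>Suc M. (a choose p) * ((Suc M - a) choose q)) = (\<Sum>a\<le>Suc M. a choose p)"
      using 0 by simp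
    also have "\<dots> = Suc (Suc M) choose Suc p" by (rule sum_choose_upper)
    finally show ?thesis using 0 by simp
  next
    case (Suc q')
    have "(\<Sum>a\<le>Suc M. (a choose p) * ((Suc M - a) choose q))
        = (\<Sum>a\<le>M. (a choose p) * ((Suc M - a) choose q)) + (Suc M choose p) * (0 choose q)"
      by simp
    also have "(0 choose q) = 0" using Suc by simp
    also have "(\<Sum>a\<le>M. (a choose p) * ((Suc M - a) choose q))
        = (\<Sum>a\<le>M. (a choose p) * ((M - a) choose q')) + (\<Sum>a\<le>M. (a choose p) * ((M - a) choose q))"
      unfolding sum.distrib[symmetric]
    proof (rule sum.cong)
      fix a assume "a \<in> {..M}"
      then have "Suc M - a = Suc (M - a)" by auto
      then show "(a choose p) * ((Suc M - a) choose q) = (a choose p) * ((M - a) choose q') + (a choose p) * ((M - a) choose q)"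
        using Suc by (simp add: binomial_Suc_Suc algebra_simps)
    qed simp
    also have "\<dots> = (Suc M choose Suc (p + q')) + (Suc M choose Suc (p + q))"
      using Suc.IH by simp
    also have "\<dots> = Suc (Suc M) choose Suc (p + q)"
      using \<open>q = Suc q'\<close> by (simp add: binomial_Suc_Suc)
    finally show ?thesis by simp
  qed
qed

lemma vand_shift: "(\<Sum>a\<le>M. ((a + i) choose (2*i)) * ((M - a + k) choose (2*k)))
   = (M + i + k + 1) choose (2*i + 2*k + 1)"
proof -
  let ?N = "M + i + k"
  let ?h = "\<lambda>a'. (a' choose (2*i)) * ((?N - a') choose (2*k))"
  have "(\<Sum>a'\<le>?N. ?h a') = (\<Sum>a'\<in>{i..i+M}. ?h a')"
  proof (rule sum.mono_neutral_right)
    show "\<forall>a'\<in>{..?N} - {i..i+M}. ?h a' = 0"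
    proof
      fix a' assume a': "a' \<in> {..?N} - {i..i+M}"
      show "?h a' = 0"
      proof (cases "a' < i")
        case True then show ?thesis by simp
      next
        case False
        then have "a' > i + M" "a' \<le> ?N" using a' by auto
        then have "?N - a' < 2 * k" by linarith
        then show ?thesis by simp
      qed
    qed
  qed auto
  also have "\<dots> = (\<Sum>a\<in>{0..M}. ?h (a + i))"
    using sum.shift_bounds_cl_nat_ivl[of ?h 0 i M] by (simp add: add.commute)
  also have "\<dots> = (\<Sum>a\<le>M. ((a + i) choose (2*i)) * ((M - a + k) choose (2*k)))"
    unfolding atMost_atLeast0[symmetric]
  proof (rule sum.cong)
    fix a assume "a \<in> {..M}"
    then have "?N - (a + i) = M - a + k" by auto
    then show "?h (a + i) = ((a + i) choose (2*i)) * ((M - a + k) choose (2*k))" by simp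
  qed simp
  finally show ?thesis using vand_upper[where M="?N" and p="2*i" and q="2*k"] by simp
qed



abbreviation rr where "rr \<equiv> large_schroeder"

lemma rr_def': "rr m = (\<Sum>k\<le>m. ((m + k) choose (2 * k)) * catalan k)"
  by (simp add: large_schroeder_def atMost_atLeast0)

lemma rr_ext: "a \<le> M \<Longrightarrow> rr a = (\<Sum>i\<le>M. ((a + i) choose (2 * i)) * catalan i)"
  unfolding rr_def'
  by (rule sum.mono_neutral_left) auto

lemma rr_conv: "(\<Sum>a\<le>M. rr a * rr (M - a)) = (\<Sum>j\<le>M. ((M + 1 + j) choose (2*j + 1)) * catalan (Suc j))"
proof -
  let ?f = "\<lambda>i k. catalan i * catalan k * ((M + i + k + 1) choose (2*i + 2*k + 1))"
  have "(\<Sum>a\<le>M. rr a * rr (M - a))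
      = (\<Sum>a\<le>M. (\<Sum>i\<le>M. ((a + i) choose (2 * i)) * catalan i) * (\<Sum>k\<le>M. ((M - a + k) choose (2 * k)) * catalan k))"
  proof (rule sum.cong)
    fix a assume "a \<in> {..M}"
    show "rr a * rr (M - a) = (\<Sum>i\<le>M. ((a + i) choose (2 * i)) * catalan i) * (\<Sum>k\<le>M. ((M - a + k) choose (2 * k)) * catalan k)"
    proof -
      have 1: "rr a = (\<Sum>i\<le>M. ((a + i) choose (2 * i)) * catalan i)" using \<open>a \<in> {..M}\<close> by (intro rr_ext) simp
      have 2: "rr (M - a) = (\<Sum>k\<le>M. ((M - a + k) choose (2 * k)) * catalan k)" by (intro rr_ext) simp
      show ?thesis by (simp only: 1 2)
    qed
  qed simp
  also have "\<dots> = (\<Sum>a\<le>M. \<Sum>i\<le>M. \<Sum>k\<le>M. (((a + i) choose (2 * i)) * catalan i) * (((M - a + k) choose (2 * k)) * catalan k))"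
    by (simp add: sum_product)
  also have "\<dots> = (\<Sum>i\<le>M. \<Sum>k\<le>M. \<Sum>a\<le>M. (((a + i) choose (2 * i)) * catalan i) * (((M - a + k) choose (2 * k)) * catalan k))"
    by (subst sum.swap, rule sum.cong[OF HOL.refl], rule sum.swap)
  also have "\<dots> = (\<Sum>i\<le>M. \<Sum>k\<le>M. ?f i k)"
  proof (intro sum.cong HOL.refl)
    fix i k
    have "(\<Sum>a\<le>M. (((a + i) choose (2 * i)) * catalan i) * (((M - a + k) choose (2 * k)) * catalan k))
        = catalan i * catalan k * (\<Sum>a\<le>M. ((a + i) choose (2*i)) * ((M - a + k) choose (2*k)))"
      by (simp add: sum_distrib_left algebra_simps)
    then show "(\<Sum>a\<le>M. (((a + i) choose (2 * i)) * catalan i) * (((M - a + k) choose (2 * k)) * catalan k)) = ?f i k"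
      using vand_shift[where M=M and i=i and k=k] by simp
  qed
  also have "\<dots> = (\<Sum>(i,k)\<in>{..M} \<times> {..M}. ?f i k)"
    by (simp add: sum.cartesian_product)
  also have "\<dots> = (\<Sum>(i,k)\<in>{(i,k). i + k \<le> M}. ?f i k)"
  proof (rule sum.mono_neutral_right)
    show "finite ({..M} \<times> {..M})" by simp
    show "{(i,k). i + k \<le> M} \<subseteq> {..M} \<times> {..M}" by auto
    show "\<forall>x\<in>{..M} \<times> {..M} - {(i,k). i + k \<le> M}. (case x of (i, k) \<Rightarrow> ?f i k) = 0"
    proof
      fix x assume "x \<in> {..M} \<times> {..M} - {(i,k). i + k \<le> M}"
      then obtain i k where "x = (i, k)" "M < i + k" by auto
      then show "(case x of (i, k) \<Rightarrow> ?f i k) = 0" by simp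
    qed
  qed
  also have "\<dots> = (\<Sum>j\<le>M. \<Sum>i\<le>j. ?f i (j - i))"
    by (rule sum.triangle_reindex_eq)
  also have "\<dots> = (\<Sum>j\<le>M. ((M + 1 + j) choose (2*j + 1)) * catalan (Suc j))"
  proof (rule sum.cong)
    fix j assume "j \<in> {..M}"
    have "(\<Sum>i\<le>j. ?f i (j - i)) = (\<Sum>i\<le>j. catalan i * catalan (j - i)) * ((M + 1 + j) choose (2*j + 1))"
      unfolding sum_distrib_right
    proof (rule sum.cong)
      fix i assume "i \<in> {..j}"
      then have "M + i + (j - i) + 1 = M + 1 + j" "2 * i + 2 * (j - i) + 1 = 2 * j + 1" by auto
      then show "?f i (j - i) = catalan i * catalan (j - i) * ((M + 1 + j) choose (2*j + 1))" by simp
    qed simp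
    then show "(\<Sum>i\<le>j. ?f i (j - i)) = ((M + 1 + j) choose (2*j + 1)) * catalan (Suc j)"
      by (simp add: catalan_rec[symmetric])
  qed simp
  finally show ?thesis .
qed

lemma cat0: "catalan 0 = 1" by (simp add: catalan_def)

lemma rr_Suc: "rr (Suc M) = rr M + (\<Sum>j\<le>M. ((M + 1 + j) choose (2*j + 1)) * catalan (Suc j))"
proof -
  have s1: "rr (Suc M) = 1 + (\<Sum>j\<le>M. ((Suc M + Suc j) choose (2 * Suc j)) * catalan (Suc j))"
    unfolding rr_def' sum.atMost_Suc_shift by (simp add: cat0)
  have s2: "(\<Sum>j\<le>M. ((Suc M + Suc j) choose (2 * Suc j)) * catalan (Suc j))
     = (\<Sum>j\<le>M. ((M + 1 + j) choose (2*j + 1)) * catalan (Suc j)) + (\<Sum>j\<le>M. ((M + 1 + j) choose (2*j + 2)) * catalan (Suc j))"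
    unfolding sum.distrib[symmetric]
  proof (rule sum.cong)
    fix j
    have "Suc M + Suc j = Suc (M + 1 + j)" "2 * Suc j = Suc (2*j + 1)" "2*j + 2 = Suc (2*j+1)" by simp_all
    then show "((Suc M + Suc j) choose (2 * Suc j)) * catalan (Suc j) =
       ((M + 1 + j) choose (2*j + 1)) * catalan (Suc j) + ((M + 1 + j) choose (2*j + 2)) * catalan (Suc j)"
      by (simp only: binomial_Suc_Suc add_mult_distrib)
  qed simp
  have s3: "rr M = 1 + (\<Sum>j<M. ((M + Suc j) choose (2 * Suc j)) * catalan (Suc j))"
  proof (cases M)
    case 0 then show ?thesis by (simp add: rr_def' cat0)
  next
    case (Suc M')
    have "rr M = (\<Sum>k\<le>Suc M'. ((M + k) choose (2 * k)) * catalan k)" unfolding rr_def' Suc ..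
    also have "\<dots> = 1 + (\<Sum>k\<le>M'. ((M + Suc k) choose (2 * Suc k)) * catalan (Suc k))"
      unfolding sum.atMost_Suc_shift by (simp add: cat0)
    also have "{..M'} = {..<M}" using Suc by auto
    finally show ?thesis .
  qed
  have s4: "(\<Sum>j\<le>M. ((M + 1 + j) choose (2*j + 2)) * catalan (Suc j)) = (\<Sum>j<M. ((M + Suc j) choose (2 * Suc j)) * catalan (Suc j))"
  proof -
    have e: "{..M} = insert M {..<M}" by auto
    have "(\<Sum>j\<le>M. ((M + 1 + j) choose (2*j + 2)) * catalan (Suc j)) = (\<Sum>j<M. ((M + 1 + j) choose (2*j + 2)) * catalan (Suc j))"
      unfolding e by (simp add: binomial_eq_0)
    then show ?thesis by simp
  qed
  show ?thesis unfolding s1 s2 s3 s4 by (simp only: add.assoc add.commute add.left_commute)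
qed

lemma schroeder_rec: "rr (Suc M) = rr M + (\<Sum>a\<le>M. rr a * rr (M - a))"
  using rr_Suc[of M] rr_conv[of M] by linarith



abbreviation SS where "SS \<equiv> shifted_schroeder"

definition WW :: "nat \<Rightarrow> nat" where "WW i = (if i = 1 then 2 else SS i)"

lemma SS_0: "SS 0 = 1" by (simp add: shifted_schroeder_def)
lemma SS_Suc: "SS (Suc j) = rr j" by (simp add: shifted_schroeder_def)
lemma rr_0: "rr 0 = 1" by (simp add: large_schroeder_def catalan_def)

lemma sum_1_Suc: "(\<Sum>i\<in>{1..Suc n}. f i) = (\<Sum>j\<le>n. f (Suc j))"
  using sum.shift_bounds_cl_Suc_ivl[of f 0 n] by (simp add: atMost_atLeast0)

lemma NH: "k \<ge> 2 \<Longrightarrow> (\<Sum>i\<in>{1..k}. (if i = k then 0 else WW i * SS (k - i))) = SS k"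
proof -
  assume "k \<ge> 2"
  then obtain m where k: "k = Suc (Suc m)" by (metis add_2_eq_Suc le_Suc_ex)
  let ?g = "\<lambda>i. (if i = k then 0 else WW i * SS (k - i))"
  let ?h = "\<lambda>j. (if j = 0 then 2 * rr m else rr j * rr (m - j))"
  have "(\<Sum>i\<in>{1..k}. ?g i) = (\<Sum>j\<le>Suc m. ?g (Suc j))" unfolding k by (rule sum_1_Suc)
  also have "\<dots> = (\<Sum>j\<le>m. ?g (Suc j))" using k by simp
  also have "\<dots> = (\<Sum>j\<le>m. ?h j)"
  proof (rule sum.cong)
    fix j assume j: "j \<in> {..m}"
    then have "k - Suc j = Suc (m - j)" using k by auto
    then show "?g (Suc j) = ?h j" using j k by (auto simp: WW_def SS_Suc)
  qed simp
  also have "\<dots> = (\<Sum>j\<le>m. rr j * rr (m - j) + (if j = 0 then rr m else 0))"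
    by (rule sum.cong) (auto simp: rr_0)
  also have "\<dots> = (\<Sum>j\<le>m. rr j * rr (m - j)) + rr m"
    by (simp add: sum.distrib)
  also have "\<dots> = rr (Suc m)" using schroeder_rec[of m] by simp
  also have "\<dots> = SS k" using k by (simp add: SS_Suc)
  finally show ?thesis .
qed

lemma NF: "k \<ge> 1 \<Longrightarrow> (\<Sum>i\<in>{1..k}. WW i * SS (k - i)) = 2 * SS k"
proof -
  assume k1: "k \<ge> 1"
  show ?thesis
  proof (cases "k = 1")
    case True then show ?thesis by (simp add: WW_def SS_0 SS_Suc rr_0)
  next
    case False
    then have k2: "k \<ge> 2" using k1 by simp
    have "(\<Sum>i\<in>{1..k}. WW i * SS (k - i))
        = (\<Sum>i\<in>{1..k}. (if i = k then 0 else WW i * SS (k - i)) + (if i = k then WW k * SS 0 else 0))"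
      by (rule sum.cong) auto
    also have "\<dots> = SS k + WW k * SS 0"
      using k1 NH[OF k2] by (simp add: sum.distrib)
    also have "\<dots> = 2 * SS k" using k2 by (simp add: WW_def SS_0)
    finally show ?thesis .
  qed
qed



definition rt :: "'a tree \<Rightarrow> 'a" where "rt t = (case t of Node _ x _ \<Rightarrow> x)"

lemma rt_Node[simp]: "rt (Node l x r) = x" by (simp add: rt_def)

definition FF :: "'a::linorder set \<Rightarrow> 'a tree set" where
  "FF X = {T. gd T \<and> set_tree T = X}"

definition HH :: "'a::linorder set \<Rightarrow> 'a tree set" where
  "HH X = {T. gd T \<and> set_tree T = X \<and> (card X = 1 \<or> rt T \<noteq> Max X)}"

definition Lt :: "'a::linorder set \<Rightarrow> 'a \<Rightarrow> 'a set" where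
  "Lt X x = {y\<in>X. y \<le> x}"

definition Gt :: "'a::linorder set \<Rightarrow> 'a \<Rightarrow> 'a set" where
  "Gt X x = {y\<in>X. x < y}"

definition LL :: "'a::linorder set \<Rightarrow> 'a \<Rightarrow> 'a tree set" where
  "LL X x = {l. gd l \<and> (\<forall>y\<in>set_tree l. y \<le> x) \<and>
     (case l of Leaf \<Rightarrow> True | Node _ z _ \<Rightarrow> z \<noteq> x \<and> x \<in> set_tree l) \<and> set_tree l \<union> {x} = Lt X x}"

definition mk :: "'a \<Rightarrow> 'a tree \<times> 'a tree \<Rightarrow> 'a tree" where
  "mk x p = Node (fst p) x (snd p)"

lemma decomp: "A \<subseteq> X \<Longrightarrow> {T \<in> FF X. rt T \<in> A} = (\<Union>x\<in>A. mk x ` (LL X x \<times> FF (Gt X x)))"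
proof
  assume AX: "A \<subseteq> X"
  show "{T \<in> FF X. rt T \<in> A} \<subseteq> (\<Union>x\<in>A. mk x ` (LL X x \<times> FF (Gt X x)))"
  proof
    fix T assume T: "T \<in> {T \<in> FF X. rt T \<in> A}"
    then have "T \<noteq> Leaf" using AX by (auto simp: FF_def)
    then obtain l x r where Tn: "T = Node l x r" by (cases T) auto
    have g: "gd (Node l x r)" "set_tree (Node l x r) = X" "x \<in> A" using T Tn by (auto simp: FF_def)
    have sr: "set_tree r = Gt X x"
    proof
      show "set_tree r \<subseteq> Gt X x" using g by (auto simp: Gt_def)
      show "Gt X x \<subseteq> set_tree r"
      proof
        fix y assume "y \<in> Gt X x"
        then have "y \<in> X" "x < y" by (auto simp: Gt_def)
        moreover have "\<forall>z\<in>set_tree l. z \<le> x" using g by simp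
        ultimately show "y \<in> set_tree r" using g(2) by auto
      qed
    qed
    have sl: "set_tree l \<union> {x} = Lt X x"
    proof
      show "set_tree l \<union> {x} \<subseteq> Lt X x" using g by (auto simp: Lt_def)
      show "Lt X x \<subseteq> set_tree l \<union> {x}"
      proof
        fix y assume "y \<in> Lt X x"
        then have "y \<in> X" "y \<le> x" by (auto simp: Lt_def)
        moreover have "\<forall>z\<in>set_tree r. x < z" using g by simp
        ultimately show "y \<in> set_tree l \<union> {x}" using g(2) by auto
      qed
    qed
    have "l \<in> LL X x" using g sl by (simp add: LL_def)
    moreover have "r \<in> FF (Gt X x)" using g sr by (simp add: FF_def)
    ultimately show "T \<in> (\<Union>x\<in>A. mk x ` (LL X x \<times> FF (Gt X x)))"
      using Tn g(3) by (force simp: mk_def)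
  qed
next
  assume AX: "A \<subseteq> X"
  show "(\<Union>x\<in>A. mk x ` (LL X x \<times> FF (Gt X x))) \<subseteq> {T \<in> FF X. rt T \<in> A}"
  proof
    fix T assume "T \<in> (\<Union>x\<in>A. mk x ` (LL X x \<times> FF (Gt X x)))"
    then obtain x l r where x: "x \<in> A" "l \<in> LL X x" "r \<in> FF (Gt X x)" "T = Node l x r"
      by (auto simp: mk_def)
    have "x \<in> X" using x AX by auto
    have "gd T" using x by (auto simp: LL_def FF_def Gt_def)
    moreover have "set_tree T = X"
    proof -
      have "set_tree T = (set_tree l \<union> {x}) \<union> set_tree r" using x by auto
      also have "\<dots> = Lt X x \<union> Gt X x" using x by (simp add: LL_def FF_def)
      also have "\<dots> = X" by (auto simp: Lt_def Gt_def)
      finally show ?thesis .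
    qed
    ultimately show "T \<in> {T \<in> FF X. rt T \<in> A}" using x by (simp add: FF_def)
  qed
qed

lemma FF_rt: "X \<noteq> {} \<Longrightarrow> FF X = {T \<in> FF X. rt T \<in> X}"
proof -
  assume "X \<noteq> {}"
  have "rt T \<in> X" if "T \<in> FF X" for T
  proof -
    from that \<open>X \<noteq> {}\<close> have "T \<noteq> Leaf" by (auto simp: FF_def)
    then obtain l x r where "T = Node l x r" by (cases T) auto
    then show ?thesis using that by (auto simp: FF_def)
  qed
  then show ?thesis by blast
qed

lemma HH_rt: "card X \<noteq> 1 \<Longrightarrow> X \<noteq> {} \<Longrightarrow> finite X \<Longrightarrow> HH X = {T \<in> FF X. rt T \<in> X - {Max X}}"
  using FF_rt by (auto simp: HH_def FF_def)

lemma card_decomp: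
  assumes "finite A" "\<forall>x\<in>A. finite (LL X x) \<and> finite (FF (Gt X x))"
  shows "finite (\<Union>x\<in>A. mk x ` (LL X x \<times> FF (Gt X x)))"
    "card (\<Union>x\<in>A. mk x ` (LL X x \<times> FF (Gt X x))) = (\<Sum>x\<in>A. card (LL X x) * card (FF (Gt X x)))"
proof -
  show "finite (\<Union>x\<in>A. mk x ` (LL X x \<times> FF (Gt X x)))" using assms by auto
  have inj: "inj_on (mk x) B" for x and B :: "('a tree \<times> 'a tree) set"
    by (rule inj_onI) (auto simp: mk_def prod_eq_iff)
  have "card (\<Union>x\<in>A. mk x ` (LL X x \<times> FF (Gt X x))) = (\<Sum>x\<in>A. card (mk x ` (LL X x \<times> FF (Gt X x))))"
    by (rule card_UN_disjoint) (use assms in \<open>auto simp: mk_def\<close>)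
  also have "\<dots> = (\<Sum>x\<in>A. card (LL X x) * card (FF (Gt X x)))"
    by (rule sum.cong) (auto simp: card_image[OF inj] card_cartesian_product)
  finally show "card (\<Union>x\<in>A. mk x ` (LL X x \<times> FF (Gt X x))) = (\<Sum>x\<in>A. card (LL X x) * card (FF (Gt X x)))" .
qed

lemma LL_single: "Lt X x = {x} \<Longrightarrow> LL X x = {Leaf}"
proof
  assume a: "Lt X x = {x}"
  show "LL X x \<subseteq> {Leaf}"
  proof
    fix l assume l: "l \<in> LL X x"
    show "l \<in> {Leaf}"
    proof (cases l)
      case Leaf then show ?thesis by simp
    next
      case (Node a' z b)
      then have "z \<in> set_tree l" "set_tree l \<subseteq> {x}" "z \<noteq> x" using l a by (auto simp: LL_def)
      then show ?thesis by auto
    qed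
  qed
  show "{Leaf} \<subseteq> LL X x" using a by (simp add: LL_def)
qed

lemma Max_Lt: "finite X \<Longrightarrow> x \<in> X \<Longrightarrow> Max (Lt X x) = x"
  by (rule Max_eqI) (auto simp: Lt_def)

lemma LL_HH: "finite X \<Longrightarrow> x \<in> X \<Longrightarrow> card (Lt X x) \<ge> 2 \<Longrightarrow> LL X x = HH (Lt X x)"
proof
  assume f: "finite X" and x: "x \<in> X" and c: "card (Lt X x) \<ge> 2"
  have M: "Max (Lt X x) = x" using f x by (rule Max_Lt)
  show "LL X x \<subseteq> HH (Lt X x)"
  proof
    fix l assume l: "l \<in> LL X x"
    show "l \<in> HH (Lt X x)"
    proof (cases l)
      case Leaf
      then have "Lt X x = {x}" using l by (simp add: LL_def)
      then show ?thesis using c by simp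
    next
      case (Node a z b)
      then have "z \<noteq> x" "x \<in> set_tree l" "set_tree l \<union> {x} = Lt X x" "gd l" using l by (auto simp: LL_def)
      then have "set_tree l = Lt X x" by auto
      then show ?thesis using \<open>z \<noteq> x\<close> \<open>gd l\<close> Node M by (simp add: HH_def)
    qed
  qed
  show "HH (Lt X x) \<subseteq> LL X x"
  proof
    fix l assume l: "l \<in> HH (Lt X x)"
    then have s: "set_tree l = Lt X x" "gd l" "rt l \<noteq> x" using c M by (auto simp: HH_def)
    have "x \<in> Lt X x" using x by (simp add: Lt_def)
    then have "l \<noteq> Leaf" using s by auto
    then obtain a z b where "l = Node a z b" by (cases l) auto
    then show "l \<in> LL X x" using s \<open>x \<in> Lt X x\<close> by (auto simp: LL_def Lt_def)
  qed
qed

lemma FF_empty: "FF {} = {Leaf}"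
  by (auto simp: FF_def)



lemma Lt_sub: "Lt X x \<subseteq> X" by (auto simp: Lt_def)
lemma Gt_sub: "Gt X x \<subseteq> X" by (auto simp: Gt_def)

lemma card_Lt_Gt: "finite X \<Longrightarrow> card (Lt X x) + card (Gt X x) = card X"
proof -
  assume f: "finite X"
  have "X = Lt X x \<union> Gt X x" "Lt X x \<inter> Gt X x = {}" by (auto simp: Lt_def Gt_def)
  then show ?thesis using f card_Un_disjoint[of "Lt X x" "Gt X x"] Lt_sub Gt_sub
    by (metis finite_subset)
qed

lemma card_Lt_pos: "finite X \<Longrightarrow> x \<in> X \<Longrightarrow> 1 \<le> card (Lt X x)"
proof -
  assume "finite X" "x \<in> X"
  then have "x \<in> Lt X x" "finite (Lt X x)" using Lt_sub finite_subset by (auto simp: Lt_def)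
  then show ?thesis by (metis One_nat_def Suc_leI card_gt_0_iff empty_iff)
qed

lemma card_Lt_max: "finite X \<Longrightarrow> x \<in> X \<Longrightarrow> card (Lt X x) = card X \<longleftrightarrow> x = Max X"
proof
  assume f: "finite X" and x: "x \<in> X" and c: "card (Lt X x) = card X"
  then have "Lt X x = X" using card_subset_eq[OF f Lt_sub] by blast
  moreover have "Max X \<in> X" using f x Max_in by blast
  ultimately have "Max X \<le> x" by (auto simp: Lt_def)
  then show "x = Max X" using f x by (simp add: antisym)
next
  assume f: "finite X" and x: "x \<in> X" and "x = Max X"
  then have "Lt X x = X" using f by (auto simp: Lt_def)
  then show "card (Lt X x) = card X" by simp
qed

lemma reindex_Lt: "finite X \<Longrightarrow> (\<Sum>x\<in>X. f (card (Lt X x))) = (\<Sum>i\<in>{1..card X}. f i)"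
proof -
  assume f: "finite X"
  let ?p = "\<lambda>x. card (Lt X x)"
  have inj: "inj_on ?p X"
  proof (rule inj_onI)
    fix x y assume xy: "x \<in> X" "y \<in> X" "?p x = ?p y"
    show "x = y"
    proof (rule ccontr)
      assume "x \<noteq> y"
      then consider "x < y" | "y < x" by fastforce
      then show False
      proof cases
        case 1
        have "y \<in> Lt X y" "y \<notin> Lt X x" "Lt X x \<subseteq> Lt X y" using xy 1 by (auto simp: Lt_def)
        then have "Lt X x \<subset> Lt X y" by blast
        then have "?p x < ?p y" using f by (meson Lt_sub finite_subset psubset_card_mono)
        then show False using xy by simp
      next
        case 2
        have "x \<in> Lt X x" "x \<notin> Lt X y" "Lt X y \<subseteq> Lt X x" using xy 2 by (auto simp: Lt_def)
        then have "Lt X y \<subset> Lt X x" by blast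
        then have "?p y < ?p x" using f by (meson Lt_sub finite_subset psubset_card_mono)
        then show False using xy by simp
      qed
    qed
  qed
  have sub: "?p ` X \<subseteq> {1..card X}"
    using f card_Lt_pos card_mono[OF f Lt_sub] by auto
  have "card (?p ` X) = card {1..card X}" using card_image[OF inj] by simp
  then have img: "?p ` X = {1..card X}" using card_subset_eq[OF _ sub] by simp
  have "(\<Sum>i\<in>{1..card X}. f i) = (\<Sum>i\<in>?p ` X. f i)" using img by simp
  also have "\<dots> = (\<Sum>x\<in>X. f (?p x))" by (rule sum.reindex[OF inj, unfolded comp_def])
  finally show ?thesis by simp
qed

lemma main_count:
  fixes X :: "'a::linorder set"
  shows "finite X \<Longrightarrow> finite (FF X) \<and> card (FF X) = SS (card X) \<and>
      (card X \<ge> 1 \<longrightarrow> finite (HH X) \<and> 2 * card (HH X) = WW (card X))"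
proof (induction "card X" arbitrary: X rule: less_induct)
  case less
  note IH = less.hyps
  note fX = less.prems
  let ?k = "card X"
  show ?case
  proof (cases "X = {}")
    case True
    then show ?thesis by (simp add: FF_empty SS_0)
  next
    case False
    then have k1: "?k \<ge> 1" using fX by (simp add: Suc_leI card_gt_0_iff)
    have Gt_ok: "finite (FF (Gt X x)) \<and> card (FF (Gt X x)) = SS (card (Gt X x))" if "x \<in> X" for x
    proof -
      have "Gt X x \<subset> X" using that by (auto simp: Gt_def)
      then have "card (Gt X x) < ?k" using fX by (simp add: psubset_card_mono)
      moreover have "finite (Gt X x)" using fX Gt_sub finite_subset by blast
      ultimately show ?thesis using IH by blast
    qed
    have LL_small: "finite (LL X x) \<and> 2 * card (LL X x) = WW (card (Lt X x))" if "x \<in> X" "x \<noteq> Max X" for x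
    proof -
      have fL: "finite (Lt X x)" using fX Lt_sub finite_subset by blast
      have c1: "card (Lt X x) \<ge> 1" using card_Lt_pos fX that by blast
      show ?thesis
      proof (cases "card (Lt X x) = 1")
        case True
        have "x \<in> Lt X x" using that by (simp add: Lt_def)
        moreover obtain a where "Lt X x = {a}" using True by (rule card_1_singletonE)
        ultimately have "Lt X x = {x}" by simp
        then show ?thesis using True by (simp add: LL_single WW_def)
      next
        case False
        then have c2: "card (Lt X x) \<ge> 2" using c1 by simp
        have "card (Lt X x) < ?k"
        proof -
          have "card (Lt X x) \<noteq> ?k" using card_Lt_max[OF fX that(1)] that(2) by blast
          moreover have "card (Lt X x) \<le> ?k" using card_mono[OF fX Lt_sub] .
          ultimately show ?thesis by linarith
        qed
        then have "finite (HH (Lt X x)) \<and> 2 * card (HH (Lt X x)) = WW (card (Lt X x))"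
          using IH[of "Lt X x"] fL c1 by simp
        then show ?thesis using LL_HH[OF fX that(1) c2] by simp
      qed
    qed
    have HH_ok: "finite (HH X) \<and> 2 * card (HH X) = WW ?k" if k2: "?k \<ge> 2"
    proof -
      let ?A = "X - {Max X}"
      have A: "?A \<subseteq> X" "finite ?A" using fX by auto
      have HHe: "HH X = (\<Union>x\<in>?A. mk x ` (LL X x \<times> FF (Gt X x)))"
        using HH_rt[of X] k2 fX False decomp[OF A(1)] by simp
      have ok: "\<forall>x\<in>?A. finite (LL X x) \<and> finite (FF (Gt X x))" using LL_small Gt_ok by blast
      have fin: "finite (HH X)" using card_decomp(1)[OF A(2) ok] HHe by simp
      have "2 * card (HH X) = 2 * (\<Sum>x\<in>?A. card (LL X x) * card (FF (Gt X x)))"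
        using card_decomp(2)[OF A(2) ok] HHe by simp
      also have "\<dots> = (\<Sum>x\<in>?A. (2 * card (LL X x)) * card (FF (Gt X x)))"
        by (simp add: sum_distrib_left mult.assoc)
      also have "\<dots> = (\<Sum>x\<in>?A. WW (card (Lt X x)) * SS (?k - card (Lt X x)))"
      proof (rule sum.cong)
        fix x assume x: "x \<in> ?A"
        then have "card (Gt X x) = ?k - card (Lt X x)" using card_Lt_Gt[OF fX, of x] by simp
        then show "(2 * card (LL X x)) * card (FF (Gt X x)) = WW (card (Lt X x)) * SS (?k - card (Lt X x))"
          using LL_small[of x] Gt_ok[of x] x by simp
      qed simp
      also have "\<dots> = (\<Sum>x\<in>X. (\<lambda>i. if i = ?k then 0 else WW i * SS (?k - i)) (card (Lt X x)))"
      proof -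
        have "(\<Sum>x\<in>X. (\<lambda>i. if i = ?k then 0 else WW i * SS (?k - i)) (card (Lt X x)))
            = (\<Sum>x\<in>?A. (\<lambda>i. if i = ?k then 0 else WW i * SS (?k - i)) (card (Lt X x)))"
          by (rule sum.mono_neutral_right) (use fX card_Lt_max[OF fX] in auto)
        also have "\<dots> = (\<Sum>x\<in>?A. WW (card (Lt X x)) * SS (?k - card (Lt X x)))"
          by (rule sum.cong) (use card_Lt_max[OF fX] in auto)
        finally show ?thesis by simp
      qed
      also have "\<dots> = (\<Sum>i\<in>{1..?k}. (if i = ?k then 0 else WW i * SS (?k - i)))"
        by (rule reindex_Lt[OF fX])
      also have "\<dots> = SS ?k" using NH[OF k2] .
      also have "\<dots> = WW ?k" using k2 by (simp add: WW_def)
      finally show ?thesis using fin by simp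
    qed
    have LL_all: "finite (LL X x) \<and> 2 * card (LL X x) = WW (card (Lt X x))" if x: "x \<in> X" for x
    proof (cases "x = Max X")
      case False then show ?thesis using LL_small x by blast
    next
      case True
      then have LtX: "Lt X x = X" using fX by (auto simp: Lt_def)
      show ?thesis
      proof (cases "?k = 1")
        case True
        obtain a where "X = {a}" using True by (rule card_1_singletonE)
        then have "Lt X x = {x}" using LtX x by simp
        then show ?thesis using True LtX by (simp add: LL_single WW_def)
      next
        case False
        then have k2: "?k \<ge> 2" using k1 by simp
        then have "LL X x = HH X" using LL_HH[OF fX x] LtX by simp
        then show ?thesis using HH_ok[OF k2] LtX by simp
      qed
    qed
    have FFe: "FF X = (\<Union>x\<in>X. mk x ` (LL X x \<times> FF (Gt X x)))"
      using FF_rt[OF False] decomp[of X X] by (metis order_refl)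
    have ok: "\<forall>x\<in>X. finite (LL X x) \<and> finite (FF (Gt X x))" using LL_all Gt_ok by blast
    have finF: "finite (FF X)" using card_decomp(1)[OF fX ok] FFe by simp
    have "2 * card (FF X) = 2 * (\<Sum>x\<in>X. card (LL X x) * card (FF (Gt X x)))"
      using card_decomp(2)[OF fX ok] FFe by simp
    also have "\<dots> = (\<Sum>x\<in>X. (2 * card (LL X x)) * card (FF (Gt X x)))"
      by (simp add: sum_distrib_left mult.assoc)
    also have "\<dots> = (\<Sum>x\<in>X. (\<lambda>i. WW i * SS (?k - i)) (card (Lt X x)))"
    proof (rule sum.cong)
      fix x assume x: "x \<in> X"
      then have "card (Gt X x) = ?k - card (Lt X x)" using card_Lt_Gt[OF fX, of x] by simp
      then show "(2 * card (LL X x)) * card (FF (Gt X x)) = (\<lambda>i. WW i * SS (?k - i)) (card (Lt X x))"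
        using LL_all[OF x] Gt_ok[OF x] by simp
    qed simp
    also have "\<dots> = (\<Sum>i\<in>{1..?k}. WW i * SS (?k - i))"
      by (rule reindex_Lt[OF fX])
    also have "\<dots> = 2 * SS ?k" using NF[OF k1] .
    finally have cF: "card (FF X) = SS ?k" by simp
    have HH_all: "finite (HH X) \<and> 2 * card (HH X) = WW ?k"
    proof (cases "?k = 1")
      case True
      then have "HH X = FF X" by (auto simp: HH_def FF_def)
      then show ?thesis using finF cF True by (simp add: WW_def SS_Suc rr_0)
    next
      case False then show ?thesis using HH_ok k1 by simp
    qed
    show ?thesis using finF cF HH_all by simp
  qed
qed



lemma sum_Pow_card:
  assumes "finite A"
  shows "(\<Sum>X\<in>Pow A. g (card X)) = (\<Sum>k=0..card A. (card A choose k) * g k)"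
proof -
  let ?S = "\<lambda>k. {B. B \<subseteq> A \<and> card B = k}"
  have P: "Pow A = (\<Union>k\<in>{0..card A}. ?S k)"
    using assms by (auto intro: card_mono)
  have "(\<Sum>X\<in>Pow A. g (card X)) = (\<Sum>k\<in>{0..card A}. \<Sum>X\<in>?S k. g (card X))"
    unfolding P by (rule sum.UNION_disjoint) (use assms in auto)
  also have "\<dots> = (\<Sum>k\<in>{0..card A}. (card A choose k) * g k)"
  proof (rule sum.cong)
    fix k
    have "(\<Sum>X\<in>?S k. g (card X)) = (\<Sum>X\<in>?S k. g k)" by (rule sum.cong) auto
    also have "\<dots> = card (?S k) * g k" by simp
    also have "card (?S k) = card A choose k" by (rule n_subsets[OF assms])
    finally show "(\<Sum>X\<in>?S k. g (card X)) = (card A choose k) * g k" .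
  qed simp
  finally show ?thesis .
qed

lemma count_gd:
  "card {T :: ('a::{linorder,finite}) tree. gd T} = (\<Sum>k=0..card (UNIV :: 'a set). (card (UNIV :: 'a set) choose k) * SS k)"
proof -
  have e: "{T :: 'a tree. gd T} = (\<Union>X\<in>Pow UNIV. FF X)" by (auto simp: FF_def)
  have "card {T :: 'a tree. gd T} = (\<Sum>X\<in>Pow (UNIV :: 'a set). card (FF X))"
    unfolding e
  proof (rule card_UN_disjoint)
    show "finite (Pow (UNIV :: 'a set))" by simp
    show "\<forall>X\<in>Pow (UNIV :: 'a set). finite (FF X)"
    proof
      fix X :: "'a set" show "finite (FF X)" using main_count[of X] by simp
    qed
    show "\<forall>X\<in>Pow (UNIV :: 'a set). \<forall>Y\<in>Pow UNIV. X \<noteq> Y \<longrightarrow> FF X \<inter> FF Y = {}"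
      by (auto simp: FF_def)
  qed
  also have "\<dots> = (\<Sum>X\<in>Pow (UNIV :: 'a set). SS (card X))"
    by (rule sum.cong) (auto simp: main_count)
  also have "\<dots> = (\<Sum>k=0..card (UNIV :: 'a set). (card (UNIV :: 'a set) choose k) * SS k)"
    by (rule sum_Pow_card) simp
  finally show ?thesis .
qed

theorem mainTheorem7:
  fixes n :: nat
  assumes "n = card (UNIV :: ('a::{linorder, finite}) set)"
  shows "card (sylv2_idempotents :: 'a list set set)
           = (\<Sum>k=0..n. (n choose k) * shifted_schroeder k)
       \<and> (\<forall>w :: 'a list. sylv2_cong (w @ w) w \<longleftrightarrow>
           (\<exists>T :: 'a tree. is_bst T \<and> two_reduced T \<and> deepest_no_left T
                \<and> sylv2_cong w (reading T)))"
proof -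
  have 1: "card (sylv2_idempotents :: 'a list set set) = card {T :: 'a tree. gd T}" by (rule card_idem)
  have 2: "card {T :: 'a tree. gd T} = (\<Sum>k=0..n. (n choose k) * shifted_schroeder k)"
    using count_gd assms by simp
  show ?thesis
  proof
    show "card (sylv2_idempotents :: 'a list set set) = (\<Sum>k=0..n. (n choose k) * shifted_schroeder k)"
      using 1 2 by simp
    show "\<forall>w :: 'a list. sylv2_cong (w @ w) w \<longleftrightarrow>
           (\<exists>T :: 'a tree. is_bst T \<and> two_reduced T \<and> deepest_no_left T \<and> sylv2_cong w (reading T))"
      using part2 by blast
  qed
qed

end
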